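(* Let $\Omega\subset\{1,\dots,N\}$ have cardinality $n$, let $0<\epsilon<1$, and let $b\in\mathbb{R}^N$ and $c\in\mathbb{R}^{2N-1}$ be random vectors with independent Bernoulli $\pm1$ entries. Let $\mu$ be the coherence of the random partial circulant matrix $\frac{1}{\sqrt n}S^b_\Omega\in\mathbb{R}^{n\times N}$, or of the random partial Toeplitz matrix $\frac1{\sqrt n}T^c_\Omega\in\mathbb{R}^{n\times N}$. Then with probability at least $1-\epsilon$, $$\mu\le 4\,\frac{\log(2N^2/\epsilon)}{\sqrt n}.$$
   Context: For $b=(b_0,\dots,b_{N-1})\in\mathbb{R}^N$ the circulant matrix $S^b\in\mathbb{R}^{N\times N}$ has entries $S^b_{i,j}=b_{(j-i)\bmod N}$, $i,j=1,\dots,N$. For $c=(c_{-N+1},\dots,c_{N-1})\in\mathbb{R}^{2N-1}$ the Toeplitz matrix $T^c\in\mathbb{R}^{N\times N}$ has entries $T^c_{i,j}=c_{j-i}$. $S^b_\Omega$ (resp. $T^c_\Omega$) is the submatrix consisting of the rows indexed by $\Omega$. A Bernoulli $\pm1$ variable takes values $\pm1$ with probability $1/2$ each. The coherence of a matrix $A$ with columns $a_1,\dots,a_N$ is $\mu=\max_{\rho\neq\lambda}|\langle a_\rho,a_\lambda\rangle|$. *)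

theory Defs
  imports "HOL-Probability.Probability"
begin

definition rademacher_pmf :: "real pmf" where
  "rademacher_pmf = map_pmf (\<lambda>x. if x then 1 else -1) (bernoulli_pmf (1/2))"

definition circulant :: "nat \<Rightarrow> (nat \<Rightarrow> real) \<Rightarrow> nat \<Rightarrow> nat \<Rightarrow> real" where
  "circulant N b i j = b (nat ((int j - int i) mod int N))"

definition toeplitz :: "(int \<Rightarrow> real) \<Rightarrow> nat \<Rightarrow> nat \<Rightarrow> real" where
  "toeplitz c i j = c (int j - int i)"

text \<open>Coherence of the matrix with rows indexed by R and columns indexed by 1..N:
  max over distinct column pairs of |<a_rho, a_lambda>| (0 if there are fewer than 2 columns).\<close>
definition coherence :: "nat set \<Rightarrow> nat \<Rightarrow> (nat \<Rightarrow> nat \<Rightarrow> real) \<Rightarrow> real" where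
  "coherence R N A = Max ({0} \<union> {\<bar>\<Sum>i\<in>R. A i r * A i l\<bar> | r l.
       r \<in> {1..N} \<and> l \<in> {1..N} \<and> r \<noteq> l})"

end

theory Submission imports Defs begin

lemma set_rad: "set_pmf rademacher_pmf = {-1, 1}"
  by (auto simp: rademacher_pmf_def)

lemma pmf_rad: "v \<in> {-1,1} \<Longrightarrow> pmf rademacher_pmf v = 1/2"
proof -
  assume v: "v \<in> {-1,1}"
  have inj: "inj (\<lambda>x::bool. if x then 1 else -1::real)" by (auto simp: inj_def split: if_splits)
  have "v = (\<lambda>x::bool. if x then 1 else -1::real) (v = 1)" using v by auto
  then have "pmf rademacher_pmf v = pmf rademacher_pmf ((\<lambda>x::bool. if x then 1 else -1::real) (v = 1))"
    by simp
  also have "\<dots> = pmf (bernoulli_pmf (1/2)) (v = 1)"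
    unfolding rademacher_pmf_def by (rule pmf_map_inj'[OF inj])
  finally show ?thesis by simp
qed

lemma pm1_mult: "a \<in> {-1,1} \<Longrightarrow> b \<in> {-1,1} \<Longrightarrow> a * b \<in> {-1,1::real}"
  by auto

definition Tmap :: "'a set \<Rightarrow> ('a \<Rightarrow> 'a) \<Rightarrow> ('a \<Rightarrow> real) \<Rightarrow> 'a \<Rightarrow> real" where
  "Tmap K \<sigma> x = (\<lambda>j. if j \<in> \<sigma> ` K then x j * x (inv_into K \<sigma> j) else x j)"

lemma Tmap_preserves:
  fixes \<sigma> :: "'a \<Rightarrow> 'a" and m :: "'a \<Rightarrow> nat"
  assumes fin: "finite I" and KI: "K \<subseteq> I" and sK: "\<sigma> ` K \<subseteq> I" and inj: "inj_on \<sigma> K"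
    and mono: "\<And>k. k \<in> K \<Longrightarrow> m k < m (\<sigma> k)"
  shows "map_pmf (Tmap K \<sigma>) (Pi_pmf I 0 (\<lambda>_. rademacher_pmf)) = Pi_pmf I 0 (\<lambda>_. rademacher_pmf)"
proof -
  define P where "P = Pi_pmf I 0 (\<lambda>_. rademacher_pmf)"
  define S where "S = PiE_dflt I (0::real) (\<lambda>_. {-1,1})"
  have setP: "set_pmf P = S" using fin by (simp add: P_def S_def set_Pi_pmf set_rad o_def)
  have finS: "finite S" unfolding S_def using fin by auto
  have into: "Tmap K \<sigma> ` S \<subseteq> S"
  proof
    fix y assume "y \<in> Tmap K \<sigma> ` S"
    then obtain x where x: "x \<in> S" and y: "y = Tmap K \<sigma> x" by auto
    show "y \<in> S" unfolding S_def PiE_dflt_def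
    proof (intro CollectI allI conjI impI)
      fix j assume j: "j \<in> I"
      show "y j \<in> {-1,1}"
      proof (cases "j \<in> \<sigma> ` K")
        case True
        then have "inv_into K \<sigma> j \<in> K" by (auto intro: inv_into_into)
        then have "inv_into K \<sigma> j \<in> I" using KI by auto
        then have a: "x (inv_into K \<sigma> j) \<in> {-1,1}" "x j \<in> {-1,1}"
          using j x by (auto simp: S_def PiE_dflt_def)
        have "y j = x j * x (inv_into K \<sigma> j)" using True y by (simp add: Tmap_def)
        then show ?thesis using a by (auto simp: pm1_mult)
      next
        case False then show ?thesis using j x y by (auto simp: Tmap_def S_def PiE_dflt_def)
      qed
    next
      fix j assume j: "j \<notin> I"
      then have "j \<notin> \<sigma> ` K" using sK by auto
      then show "y j = 0" using j x y by (auto simp: Tmap_def S_def PiE_dflt_def)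
    qed
  qed
  have injT: "inj_on (Tmap K \<sigma>) S"
  proof
    fix x x' assume x: "x \<in> S" and x': "x' \<in> S" and eq: "Tmap K \<sigma> x = Tmap K \<sigma> x'"
    have "x j = x' j" for j
    proof (induction "m j" arbitrary: j rule: less_induct)
      case less
      show ?case
      proof (cases "j \<in> \<sigma> ` K")
        case True
        then obtain k where k: "k \<in> K" and jk: "j = \<sigma> k" by auto
        have ik: "inv_into K \<sigma> j = k" using inv_into_f_f[OF inj k] jk by simp
        have "m k < m j" using mono k jk by simp
        then have xk: "x k = x' k" by (rule less)
        have "x k \<in> {-1,1}" using x k KI by (auto simp: S_def PiE_dflt_def)
        then have nz: "x k \<noteq> 0" by auto
        have "x j * x k = x' j * x' k"
          using fun_cong[OF eq, of j] True ik by (simp add: Tmap_def)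
        then show ?thesis using xk nz by simp
      next
        case False
        then show ?thesis using fun_cong[OF eq, of j] by (simp add: Tmap_def)
      qed
    qed
    then show "x = x'" by auto
  qed
  have onto: "Tmap K \<sigma> ` S = S" by (rule endo_inj_surj[OF finS into injT])
  have const: "pmf P x = (1/2) ^ card I" if "x \<in> S" for x
    using that fin by (simp add: P_def pmf_Pi S_def PiE_dflt_def pmf_rad)
  show ?thesis
    unfolding P_def[symmetric]
  proof (rule pmf_eqI)
    fix y
    show "pmf (map_pmf (Tmap K \<sigma>) P) y = pmf P y"
    proof (cases "y \<in> S")
      case True
      then obtain x where x: "x \<in> S" and y: "y = Tmap K \<sigma> x" using onto by force
      have "pmf (map_pmf (Tmap K \<sigma>) P) y = pmf P x"
        unfolding y by (rule pmf_map_inj) (use injT x setP in auto)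
      then show ?thesis using const x True by simp
    next
      case False
      have "set_pmf (map_pmf (Tmap K \<sigma>) P) = S" using onto setP by simp
      then have "pmf (map_pmf (Tmap K \<sigma>) P) y = 0" using False by (simp add: pmf_eq_0_set_pmf)
      moreover have "pmf P y = 0" using False setP by (simp add: pmf_eq_0_set_pmf)
      ultimately show ?thesis by simp
    qed
  qed
qed

lemma E_rad: "measure_pmf.expectation rademacher_pmf (\<lambda>x. x) = 0"
  by (simp add: rademacher_pmf_def)

lemma rad_tail:
  assumes fin: "finite I" and GI: "G \<subseteq> I" and Gne: "G \<noteq> {}" and t: "t \<ge> 0"
  shows "measure_pmf.prob (Pi_pmf I 0 (\<lambda>_. rademacher_pmf)) {x. \<bar>\<Sum>j\<in>G. x j\<bar> \<ge> t}
           \<le> 2 * exp (- (t^2) / (2 * card G))"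
proof -
  define P where "P = Pi_pmf I 0 (\<lambda>_. rademacher_pmf)"
  have finG: "finite G" using fin GI finite_subset by blast
  interpret H: Hoeffding_ineq "measure_pmf P" G "\<lambda>i f. f i" "\<lambda>_. -1" "\<lambda>_. 1" 0
  proof unfold_locales
    show "finite G" by (rule finG)
    show "prob_space.indep_vars (measure_pmf P) (\<lambda>_. borel) (\<lambda>i f. f i) G"
      unfolding P_def
      by (intro prob_space.indep_vars_compose2[where Y="\<lambda>_ x. x", OF _ prob_space.indep_vars_subset[OF _ indep_vars_Pi_pmf[OF fin] GI]])
         (auto simp: measure_pmf.prob_space_axioms)
  next
    fix i assume i: "i \<in> G"
    have "set_pmf P \<subseteq> {f. f i \<in> {-1,1}}"
      using i GI fin by (auto simp: P_def set_Pi_pmf PiE_dflt_def set_rad)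
    then show "AE x in measure_pmf P. x i \<in> {-1..1}"
      by (intro AE_pmfI) auto
  next
    have "\<And>i. i \<in> G \<Longrightarrow> measure_pmf.expectation P (\<lambda>f. f i) = 0"
    proof -
      fix i assume i: "i \<in> G"
      have "measure_pmf.expectation P (\<lambda>f. f i) = measure_pmf.expectation (map_pmf (\<lambda>f. f i) P) (\<lambda>x. x)"
        by simp
      also have "map_pmf (\<lambda>f. f i) P = rademacher_pmf"
        using i GI fin by (auto simp: P_def Pi_pmf_component)
      finally show "measure_pmf.expectation P (\<lambda>f. f i) = 0" using E_rad by simp
    qed
    then show "0 \<equiv> \<Sum>i\<in>G. measure_pmf.expectation P (\<lambda>f. f i)" by simp
  qed
  have pos: "(\<Sum>i\<in>G. (1 - (-1::real))\<^sup>2) > 0" using finG Gne by (simp add: card_gt_0_iff)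
  have "measure_pmf.prob P {x \<in> space (measure_pmf P). \<bar>(\<Sum>i\<in>G. x i) - 0\<bar> \<ge> t}
     \<le> 2 * exp (-2 * t\<^sup>2 / (\<Sum>i\<in>G. (1 - (-1::real))\<^sup>2))"
    by (rule H.Hoeffding_ineq_abs_ge[OF t pos])
  also have "-2 * t\<^sup>2 / (\<Sum>i\<in>G. (1 - (-1::real))\<^sup>2) = - (t^2) / (2 * card G)"
    by simp
  finally show ?thesis by (simp add: P_def)
qed


lemma pair_tail:
  fixes \<sigma> :: "'a \<Rightarrow> 'a" and m :: "'a \<Rightarrow> nat"
  assumes fin: "finite I" and KI: "K \<subseteq> I" and sK: "\<sigma> ` K \<subseteq> I" and inj: "inj_on \<sigma> K"
    and mono: "\<And>k. k \<in> K \<Longrightarrow> m k < m (\<sigma> k)" and Kne: "K \<noteq> {}" and t: "t \<ge> 0"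
  shows "measure_pmf.prob (Pi_pmf I 0 (\<lambda>_. rademacher_pmf)) {x. \<bar>\<Sum>k\<in>K. x k * x (\<sigma> k)\<bar> \<ge> t}
           \<le> 2 * exp (- (t^2) / (2 * card K))"
proof -
  define P where "P = Pi_pmf I 0 (\<lambda>_. rademacher_pmf)"
  have sumeq: "(\<Sum>k\<in>K. x k * x (\<sigma> k)) = (\<Sum>j\<in>\<sigma> ` K. Tmap K \<sigma> x j)" for x
  proof -
    have "(\<Sum>j\<in>\<sigma> ` K. Tmap K \<sigma> x j) = (\<Sum>k\<in>K. Tmap K \<sigma> x (\<sigma> k))"
      by (rule sum.reindex[OF inj, unfolded o_def])
    also have "\<dots> = (\<Sum>k\<in>K. x k * x (\<sigma> k))"
      by (rule sum.cong) (auto simp: Tmap_def inv_into_f_f[OF inj])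
    finally show ?thesis by simp
  qed
  have "{x. \<bar>\<Sum>k\<in>K. x k * x (\<sigma> k)\<bar> \<ge> t} = Tmap K \<sigma> -` {y. \<bar>\<Sum>j\<in>\<sigma> ` K. y j\<bar> \<ge> t}"
    using sumeq by auto
  then have "measure_pmf.prob P {x. \<bar>\<Sum>k\<in>K. x k * x (\<sigma> k)\<bar> \<ge> t}
      = measure_pmf.prob (map_pmf (Tmap K \<sigma>) P) {y. \<bar>\<Sum>j\<in>\<sigma> ` K. y j\<bar> \<ge> t}"
    by simp
  also have "map_pmf (Tmap K \<sigma>) P = P"
    unfolding P_def by (rule Tmap_preserves[of I K \<sigma> m, OF fin KI sK inj mono])
  also have "measure_pmf.prob P {y. \<bar>\<Sum>j\<in>\<sigma> ` K. y j\<bar> \<ge> t} \<le> 2 * exp (- (t^2) / (2 * card (\<sigma> ` K)))"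
    unfolding P_def by (rule rad_tail[OF fin sK _ t]) (use Kne in auto)
  also have "card (\<sigma> ` K) = card K" by (rule card_image[OF inj])
  finally show ?thesis by (simp add: P_def)
qed

lemma pair_bound:
  fixes \<sigma> :: "'a \<Rightarrow> 'a" and m :: "'a \<Rightarrow> nat" and n :: nat and L :: real
  assumes fin: "finite I" and KI: "K \<subseteq> I" and sK: "\<sigma> ` K \<subseteq> I" and inj: "inj_on \<sigma> K"
    and mono: "\<And>k. k \<in> K \<Longrightarrow> m k < m (\<sigma> k)" and Kn: "card K \<le> n" and n: "n > 0" and L: "L \<ge> 1"
  shows "measure_pmf.prob (Pi_pmf I 0 (\<lambda>_. rademacher_pmf)) {x. \<bar>\<Sum>k\<in>K. x k * x (\<sigma> k)\<bar> > 2 * L * sqrt n}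
           \<le> 2 * exp (- 2 * L)"
proof (cases "K = {}")
  case True
  have "{x. \<bar>\<Sum>k\<in>K. x k * x (\<sigma> k)\<bar> > 2 * L * sqrt n} = {}"
    using True L n by (auto simp: not_less intro!: mult_nonneg_nonneg)
  then show ?thesis by simp
next
  case False
  define t where "t = 2 * L * sqrt n"
  have t: "t \<ge> 0" using L n by (simp add: t_def)
  have finK: "finite K" using fin KI finite_subset by blast
  have cpos: "card K > 0" using False finK by (simp add: card_gt_0_iff)
  have "measure_pmf.prob (Pi_pmf I 0 (\<lambda>_. rademacher_pmf)) {x. \<bar>\<Sum>k\<in>K. x k * x (\<sigma> k)\<bar> > t}
     \<le> measure_pmf.prob (Pi_pmf I 0 (\<lambda>_. rademacher_pmf)) {x. \<bar>\<Sum>k\<in>K. x k * x (\<sigma> k)\<bar> \<ge> t}"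
    by (intro measure_pmf.finite_measure_mono) auto
  also have "\<dots> \<le> 2 * exp (- (t^2) / (2 * card K))"
    by (rule pair_tail[of I K \<sigma> m, OF fin KI sK inj mono False t])
  also have "\<dots> \<le> 2 * exp (- 2 * L)"
  proof -
    have t2: "t^2 = 4 * L^2 * n" using n by (simp add: t_def power_mult_distrib)
    have "2 * L * (2 * real (card K)) \<le> 2 * L^2 * (2 * real n)"
    proof -
      have "L \<le> L^2" using L by (simp add: power2_eq_square)
      moreover have "real (card K) \<le> real n" using Kn by simp
      ultimately show ?thesis using L by (intro mult_mono) auto
    qed
    then have "2 * L \<le> t^2 / (2 * card K)" using cpos t2 by (simp add: field_simps)
    then show ?thesis by simp
  qed
  finally show ?thesis by (simp add: t_def)
qed


lemma coh_le:
  assumes B: "B \<ge> 0" and H: "\<And>r l. r \<in> {1..N} \<Longrightarrow> l \<in> {1..N} \<Longrightarrow> r \<noteq> l \<Longrightarrow> \<bar>\<Sum>i\<in>R. A i r * A i l\<bar> \<le> B"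
  shows "coherence R N A \<le> B"
proof -
  have fin: "finite {\<bar>\<Sum>i\<in>R. A i r * A i l\<bar> | r l. r \<in> {1..N} \<and> l \<in> {1..N} \<and> r \<noteq> l}"
  proof -
    have "{\<bar>\<Sum>i\<in>R. A i r * A i l\<bar> | r l. r \<in> {1..N} \<and> l \<in> {1..N} \<and> r \<noteq> l}
        \<subseteq> (\<lambda>(r,l). \<bar>\<Sum>i\<in>R. A i r * A i l\<bar>) ` ({1..N} \<times> {1..N})" by auto
    then show ?thesis by (rule finite_subset) auto
  qed
  show ?thesis unfolding coherence_def
    using fin B H by (subst Max_le_iff) auto
qed

lemma union_bound:
  fixes P :: "'b pmf" and Pairs :: "'c set" and \<delta> :: real
  assumes fin: "finite Pairs" and cov: "\<And>x. (\<forall>p\<in>Pairs. x \<notin> Bad p) \<Longrightarrow> x \<in> G"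
    and bnd: "\<And>p. p \<in> Pairs \<Longrightarrow> measure_pmf.prob P (Bad p) \<le> \<delta>"
  shows "measure_pmf.prob P G \<ge> 1 - card Pairs * \<delta>"
proof -
  have sub: "UNIV - G \<subseteq> (\<Union>p\<in>Pairs. Bad p)" using cov by blast
  have "measure_pmf.prob P (UNIV - G) \<le> measure_pmf.prob P (\<Union>p\<in>Pairs. Bad p)"
    using sub by (intro measure_pmf.finite_measure_mono) auto
  also have "\<dots> \<le> (\<Sum>p\<in>Pairs. measure_pmf.prob P (Bad p))"
    by (rule measure_pmf.finite_measure_subadditive_finite[OF fin]) auto
  also have "\<dots> \<le> (\<Sum>p\<in>Pairs. \<delta>)" by (rule sum_mono) (rule bnd)
  also have "\<dots> = card Pairs * \<delta>" by simp
  finally have "measure_pmf.prob P (UNIV - G) \<le> card Pairs * \<delta>" .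
  moreover have "measure_pmf.prob P (UNIV - G) = 1 - measure_pmf.prob P G"
    using measure_pmf.prob_compl[of G P] by simp
  ultimately show ?thesis by simp
qed

lemma circ_pair:
  fixes N n r l :: nat and L :: real and \<Omega> :: "nat set"
  assumes \<Omega>: "\<Omega> \<subseteq> {1..N}" and cardn: "card \<Omega> = n" and n: "n > 0" and L: "L \<ge> 1"
    and r: "r \<in> {1..N}" and l: "l \<in> {1..N}" and rl: "r \<noteq> l"
  shows "measure_pmf.prob (Pi_pmf {0..<N} 0 (\<lambda>_. rademacher_pmf))
     {b. \<bar>\<Sum>i\<in>\<Omega>. b (nat ((int r - int i) mod int N)) * b (nat ((int l - int i) mod int N))\<bar> > 4 * L * sqrt n}
     \<le> 4 * exp (- 2 * L)"
proof -
  define a where "a i = nat ((int r - int i) mod int N)" for i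
  define d where "d = nat ((int l - int r) mod int N)"
  have Npos: "N > 0" using r by auto
  have dlt: "d < N" using Npos by (simp add: d_def nat_less_iff)
  have dpos: "d > 0"
  proof (rule ccontr)
    assume "\<not> d > 0"
    moreover have "0 \<le> (int l - int r) mod int N" using Npos by simp
    ultimately have "(int l - int r) mod int N = 0" unfolding d_def by simp
    then have "int N dvd (int l - int r)" by auto
    moreover have "int l - int r \<noteq> 0" using rl by simp
    ultimately have "\<bar>int N\<bar> \<le> \<bar>int l - int r\<bar>" by (rule dvd_imp_le_int[rotated])
    then show False using r l by auto
  qed
  have a'eq: "nat ((int l - int i) mod int N) = (a i + d) mod N" for i
  proof -
    have "int ((a i + d) mod N) = (int (a i) + int d) mod int N" by (simp add: zmod_int)
    also have "int (a i) = (int r - int i) mod int N" using Npos by (simp add: a_def)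
    also have "int d = (int l - int r) mod int N" using Npos by (simp add: d_def)
    also have "((int r - int i) mod int N + (int l - int r) mod int N) mod int N = (int l - int i) mod int N"
      by (simp add: mod_add_eq)
    finally show ?thesis by simp
  qed
  have inja: "inj_on a \<Omega>"
  proof
    fix i j assume i: "i \<in> \<Omega>" and j: "j \<in> \<Omega>" and eq: "a i = a j"
    have "(int r - int i) mod int N = (int r - int j) mod int N"
      using eq Npos unfolding a_def by (simp add: nat_eq_iff2)
    then have "int N dvd (int r - int i) - (int r - int j)" by (simp only: mod_eq_dvd_iff)
    then have dv: "int N dvd (int j - int i)" by simp
    have ij: "i \<in> {1..N}" "j \<in> {1..N}" using i j \<Omega> by auto
    show "i = j"
    proof (rule ccontr)
      assume "i \<noteq> j"
      then have "int j - int i \<noteq> 0" by simp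
      then have "\<bar>int N\<bar> \<le> \<bar>int j - int i\<bar>" using dv by (rule dvd_imp_le_int)
      then show False using ij by auto
    qed
  qed
  have finO: "finite \<Omega>" using \<Omega> finite_subset by blast
  define K where "K = a ` \<Omega>"
  have finK: "finite K" using finO by (simp add: K_def)
  have cardK: "card K = n" using card_image[OF inja] cardn by (simp add: K_def)
  have alt: "a i < N" for i using Npos by (simp add: a_def nat_less_iff)
  have KI: "K \<subseteq> {0..<N}" using alt by (auto simp: K_def)
  define K1 where "K1 = {k\<in>K. k + d < N}"
  define K2 where "K2 = {k\<in>K. \<not> k + d < N}"
  have KU: "K = K1 \<union> K2" and Kdis: "K1 \<inter> K2 = {}" by (auto simp: K1_def K2_def)
  have finK12: "finite K1" "finite K2" using finK by (auto simp: K1_def K2_def)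
  have sumeq: "(\<Sum>i\<in>\<Omega>. b (nat ((int r - int i) mod int N)) * b (nat ((int l - int i) mod int N)))
      = (\<Sum>k\<in>K1. b k * b (k + d)) + (\<Sum>k\<in>K2. b k * b (k + d - N))" for b :: "nat \<Rightarrow> real"
  proof -
    have "(\<Sum>i\<in>\<Omega>. b (nat ((int r - int i) mod int N)) * b (nat ((int l - int i) mod int N)))
        = (\<Sum>i\<in>\<Omega>. b (a i) * b ((a i + d) mod N))"
      by (rule sum.cong) (simp_all add: a'eq a_def[symmetric])
    also have "\<dots> = (\<Sum>k\<in>K. b k * b ((k + d) mod N))"
      unfolding K_def by (rule sum.reindex[OF inja, unfolded o_def, symmetric])
    also have "\<dots> = (\<Sum>k\<in>K1. b k * b ((k + d) mod N)) + (\<Sum>k\<in>K2. b k * b ((k + d) mod N))"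
      unfolding KU by (rule sum.union_disjoint[OF finK12 Kdis])
    also have "(\<Sum>k\<in>K1. b k * b ((k + d) mod N)) = (\<Sum>k\<in>K1. b k * b (k + d))"
      by (rule sum.cong) (auto simp: K1_def)
    also have "(\<Sum>k\<in>K2. b k * b ((k + d) mod N)) = (\<Sum>k\<in>K2. b k * b (k + d - N))"
    proof (rule sum.cong)
      fix k assume k: "k \<in> K2"
      then have "k < N" "\<not> k + d < N" using KI by (auto simp: K2_def)
      then have "(k + d) mod N = k + d - N" using dlt
        by (simp add: le_mod_geq not_less)
      then show "b k * b ((k + d) mod N) = b k * b (k + d - N)" by simp
    qed simp
    finally show ?thesis .
  qed
  have c1: "card K1 \<le> n" and c2: "card K2 \<le> n"
    using card_mono[OF finK, of K1] card_mono[OF finK, of K2] cardK by (auto simp: K1_def K2_def)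
  have B1: "measure_pmf.prob (Pi_pmf {0..<N} 0 (\<lambda>_. rademacher_pmf))
      {b. \<bar>\<Sum>k\<in>K1. b k * b (k + d)\<bar> > 2 * L * sqrt n} \<le> 2 * exp (- 2 * L)"
    by (rule pair_bound[of "{0..<N}" K1 "\<lambda>k. k + d" "\<lambda>k. k" n L])
       (use KI c1 n L dpos in \<open>auto simp: K1_def inj_on_def\<close>)
  have B2: "measure_pmf.prob (Pi_pmf {0..<N} 0 (\<lambda>_. rademacher_pmf))
      {b. \<bar>\<Sum>k\<in>K2. b k * b (k + d - N)\<bar> > 2 * L * sqrt n} \<le> 2 * exp (- 2 * L)"
    apply (rule pair_bound[of "{0..<N}" K2 "\<lambda>k. k + d - N" "\<lambda>k. N - k" n L])
    subgoal by simp
    subgoal using KI by (auto simp: K2_def)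
    subgoal using KI dlt by (auto simp: K2_def)
    subgoal by (auto simp: K2_def inj_on_def)
    subgoal using KI dlt by (auto simp: K2_def)
    using c2 n L by auto
  let ?P = "Pi_pmf {0..<N} 0 (\<lambda>_. rademacher_pmf)"
  have "{b. \<bar>\<Sum>i\<in>\<Omega>. b (nat ((int r - int i) mod int N)) * b (nat ((int l - int i) mod int N))\<bar> > 4 * L * sqrt n}
     \<subseteq> {b. \<bar>\<Sum>k\<in>K1. b k * b (k + d)\<bar> > 2 * L * sqrt n} \<union> {b. \<bar>\<Sum>k\<in>K2. b k * b (k + d - N)\<bar> > 2 * L * sqrt n}"
  proof (rule subsetI)
    fix b :: "nat \<Rightarrow> real"
    assume "b \<in> {b. \<bar>\<Sum>i\<in>\<Omega>. b (nat ((int r - int i) mod int N)) * b (nat ((int l - int i) mod int N))\<bar> > 4 * L * sqrt n}"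
    then have h: "\<bar>(\<Sum>k\<in>K1. b k * b (k + d)) + (\<Sum>k\<in>K2. b k * b (k + d - N))\<bar> > 4 * L * sqrt n"
      by (simp only: mem_Collect_eq sumeq)
    have "\<bar>(\<Sum>k\<in>K1. b k * b (k + d)) + (\<Sum>k\<in>K2. b k * b (k + d - N))\<bar>
       \<le> \<bar>\<Sum>k\<in>K1. b k * b (k + d)\<bar> + \<bar>\<Sum>k\<in>K2. b k * b (k + d - N)\<bar>" by (rule abs_triangle_ineq)
    then have "\<bar>\<Sum>k\<in>K1. b k * b (k + d)\<bar> > 2 * L * sqrt n \<or> \<bar>\<Sum>k\<in>K2. b k * b (k + d - N)\<bar> > 2 * L * sqrt n"
      using h by linarith
    then show "b \<in> {b. \<bar>\<Sum>k\<in>K1. b k * b (k + d)\<bar> > 2 * L * sqrt n} \<union> {b. \<bar>\<Sum>k\<in>K2. b k * b (k + d - N)\<bar> > 2 * L * sqrt n}"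
      by blast
  qed
  then have "measure_pmf.prob ?P {b. \<bar>\<Sum>i\<in>\<Omega>. b (nat ((int r - int i) mod int N)) * b (nat ((int l - int i) mod int N))\<bar> > 4 * L * sqrt n}
     \<le> measure_pmf.prob ?P ({b. \<bar>\<Sum>k\<in>K1. b k * b (k + d)\<bar> > 2 * L * sqrt n} \<union> {b. \<bar>\<Sum>k\<in>K2. b k * b (k + d - N)\<bar> > 2 * L * sqrt n})"
    by (intro measure_pmf.finite_measure_mono) auto
  also have "\<dots> \<le> measure_pmf.prob ?P {b. \<bar>\<Sum>k\<in>K1. b k * b (k + d)\<bar> > 2 * L * sqrt n}
      + measure_pmf.prob ?P {b. \<bar>\<Sum>k\<in>K2. b k * b (k + d - N)\<bar> > 2 * L * sqrt n}"
    by (rule measure_Un_le) auto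
  also have "\<dots> \<le> 4 * exp (- 2 * L)" using B1 B2 by simp
  finally show ?thesis .
qed

lemma toep_pair:
  fixes N n r l :: nat and L :: real and \<Omega> :: "nat set"
  assumes \<Omega>: "\<Omega> \<subseteq> {1..N}" and cardn: "card \<Omega> = n" and n: "n > 0" and L: "L \<ge> 1"
    and r: "r \<in> {1..N}" and l: "l \<in> {1..N}" and rl: "r \<noteq> l"
  shows "measure_pmf.prob (Pi_pmf {-(int N - 1)..int N - 1} 0 (\<lambda>_. rademacher_pmf))
     {c. \<bar>\<Sum>i\<in>\<Omega>. c (int r - int i) * c (int l - int i)\<bar> > 4 * L * sqrt n}
     \<le> 4 * exp (- 2 * L)"
proof -
  define I where "I = {-(int N - 1)..int N - 1}"
  define a where "a i = int r - int i" for i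
  define \<sigma> where "\<sigma> k = k + (int l - int r)" for k
  define m where "m k = (if l > r then nat (k + int N) else nat (int N - k))" for k
  have finO: "finite \<Omega>" using \<Omega> finite_subset by blast
  have inja: "inj_on a \<Omega>" by (auto simp: a_def inj_on_def)
  define K where "K = a ` \<Omega>"
  have cardK: "card K = n" using card_image[OF inja] cardn by (simp add: K_def)
  have KI: "K \<subseteq> I" using \<Omega> r by (auto simp: K_def a_def I_def)
  have sK: "\<sigma> ` K \<subseteq> I" using \<Omega> l by (auto simp: K_def a_def I_def \<sigma>_def)
  have injs: "inj_on \<sigma> K" by (auto simp: \<sigma>_def inj_on_def)
  have mono: "m k < m (\<sigma> k)" if "k \<in> K" for k
    using that KI rl by (auto simp: m_def \<sigma>_def I_def)
  have sumeq: "(\<Sum>i\<in>\<Omega>. c (int r - int i) * c (int l - int i)) = (\<Sum>k\<in>K. c k * c (\<sigma> k))" for c :: "int \<Rightarrow> real"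
  proof -
    have "(\<Sum>i\<in>\<Omega>. c (int r - int i) * c (int l - int i)) = (\<Sum>i\<in>\<Omega>. c (a i) * c (\<sigma> (a i)))"
      by (rule sum.cong) (simp_all add: a_def \<sigma>_def)
    also have "\<dots> = (\<Sum>k\<in>K. c k * c (\<sigma> k))"
      unfolding K_def by (rule sum.reindex[OF inja, unfolded o_def, symmetric])
    finally show ?thesis .
  qed
  have B: "measure_pmf.prob (Pi_pmf I 0 (\<lambda>_. rademacher_pmf))
      {c. \<bar>\<Sum>k\<in>K. c k * c (\<sigma> k)\<bar> > 2 * L * sqrt n} \<le> 2 * exp (- 2 * L)"
    by (rule pair_bound[of I K \<sigma> m n L, OF _ KI sK injs mono]) (use cardK n L in \<open>auto simp: I_def\<close>)
  have sub: "{c. \<bar>\<Sum>i\<in>\<Omega>. c (int r - int i) * c (int l - int i)\<bar> > 4 * L * sqrt n}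
      \<subseteq> {c. \<bar>\<Sum>k\<in>K. c k * c (\<sigma> k)\<bar> > 2 * L * sqrt n}"
  proof (rule subsetI)
    fix c :: "int \<Rightarrow> real"
    assume "c \<in> {c. \<bar>\<Sum>i\<in>\<Omega>. c (int r - int i) * c (int l - int i)\<bar> > 4 * L * sqrt n}"
    then have h: "\<bar>\<Sum>k\<in>K. c k * c (\<sigma> k)\<bar> > 4 * L * sqrt n" by (simp only: mem_Collect_eq sumeq)
    have "2 * L * sqrt n \<le> 4 * L * sqrt n" using L by simp
    then show "c \<in> {c. \<bar>\<Sum>k\<in>K. c k * c (\<sigma> k)\<bar> > 2 * L * sqrt n}" using h by simp
  qed
  have "measure_pmf.prob (Pi_pmf I 0 (\<lambda>_. rademacher_pmf))
     {c. \<bar>\<Sum>i\<in>\<Omega>. c (int r - int i) * c (int l - int i)\<bar> > 4 * L * sqrt n}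
     \<le> measure_pmf.prob (Pi_pmf I 0 (\<lambda>_. rademacher_pmf)) {c. \<bar>\<Sum>k\<in>K. c k * c (\<sigma> k)\<bar> > 2 * L * sqrt n}"
    using sub by (intro measure_pmf.finite_measure_mono) auto
  also have "\<dots> \<le> 4 * exp (- 2 * L)" using B exp_gt_zero[of "- 2 * L"] by linarith
  finally show ?thesis by (simp add: I_def)
qed

lemma final_arith:
  fixes N :: nat and \<epsilon> :: real
  assumes N: "N \<ge> 1" and e: "0 < \<epsilon>" "\<epsilon> < 1"
  shows "real (N * N) * (4 * exp (- 2 * ln (2 * real N ^ 2 / \<epsilon>))) \<le> \<epsilon>"
proof -
  define x where "x = 2 * real N ^ 2 / \<epsilon>"
  have xpos: "x > 0" using N e by (simp add: x_def)
  have "exp (- 2 * ln x) = exp (- ln x) * exp (- ln x)" by (simp add: exp_add[symmetric])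
  also have "exp (- ln x) = 1 / x" using xpos by (simp add: exp_minus inverse_eq_divide)
  finally have ex0: "exp (- 2 * ln x) = (1/x) * (1/x)" .
  have ex: "exp (- 2 * ln x) = \<epsilon>^2 / (4 * real N ^ 4)"
    unfolding ex0 using N e by (simp add: x_def field_simps power4_eq_xxxx power2_eq_square)
  have "real (N * N) * (4 * (\<epsilon>^2 / (4 * real N ^ 4))) = \<epsilon>^2 / real N ^ 2"
    using N by (simp add: field_simps power2_eq_square power4_eq_xxxx)
  also have "\<dots> \<le> \<epsilon>^2"
  proof -
    have "1 \<le> real N ^ 2" using N by simp
    then have "\<epsilon>^2 / real N ^ 2 \<le> \<epsilon>^2 / 1" using N by (intro divide_left_mono) auto
    then show ?thesis by simp
  qed
  also have "\<epsilon>^2 \<le> \<epsilon>" using e by (simp add: power2_eq_square)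
  finally show ?thesis using ex by (simp add: x_def)
qed

lemma scale_bound:
  fixes f g :: "nat \<Rightarrow> real" and n :: nat
  assumes n: "n > 0" and S: "\<bar>\<Sum>i\<in>\<Omega>. f i * g i\<bar> \<le> 4 * L * sqrt n"
  shows "\<bar>\<Sum>i\<in>\<Omega>. (f i / sqrt n) * (g i / sqrt n)\<bar> \<le> 4 * L / sqrt n"
proof -
  have sn: "sqrt (real n) * sqrt (real n) = real n" by simp
  have snp: "sqrt (real n) > 0" using n by simp
  have t: "(f i / sqrt n) * (g i / sqrt n) = f i * g i / n" for i
  proof -
    have "(f i / sqrt n) * (g i / sqrt n) = f i * g i / (sqrt n * sqrt n)" by simp
    then show ?thesis by (simp only: sn)
  qed
  have "(\<Sum>i\<in>\<Omega>. (f i / sqrt n) * (g i / sqrt n)) = (\<Sum>i\<in>\<Omega>. f i * g i) / n"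
    by (simp only: t sum_divide_distrib)
  then have "\<bar>\<Sum>i\<in>\<Omega>. (f i / sqrt n) * (g i / sqrt n)\<bar> = \<bar>\<Sum>i\<in>\<Omega>. f i * g i\<bar> / n" by simp
  also have "\<dots> \<le> 4 * L * sqrt n / n" using S n by (simp add: divide_right_mono)
  also have "4 * L * sqrt n / n = 4 * L * sqrt n / (sqrt n * sqrt n)" by (simp only: sn)
  also have "\<dots> = 4 * L / sqrt n" using snp by (simp add: field_simps)
  finally show ?thesis .
qed

theorem proposition3:
  fixes N n :: nat and \<Omega> :: "nat set" and \<epsilon> :: real
  assumes "\<Omega> \<subseteq> {1..N}" and "card \<Omega> = n"
    and "0 < \<epsilon>" and "\<epsilon> < 1"
  shows "measure_pmf.prob (Pi_pmf {0..<N} 0 (\<lambda>_. rademacher_pmf))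
           {b. coherence \<Omega> N (\<lambda>i j. circulant N b i j / sqrt n)
                 \<le> 4 * ln (2 * real N ^ 2 / \<epsilon>) / sqrt n} \<ge> 1 - \<epsilon> \<and>
         measure_pmf.prob (Pi_pmf {-(int N - 1)..int N - 1} 0 (\<lambda>_. rademacher_pmf))
           {c. coherence \<Omega> N (\<lambda>i j. toeplitz c i j / sqrt n)
                 \<le> 4 * ln (2 * real N ^ 2 / \<epsilon>) / sqrt n} \<ge> 1 - \<epsilon>"
proof -
  note \<Omega> = assms(1) and cardn = assms(2) and e = assms(3,4)
  define L where "L = ln (2 * real N ^ 2 / \<epsilon>)"
  have finO: "finite \<Omega>" using \<Omega> finite_subset by blast
  show ?thesis
  proof (cases "n = 0")
    case True
    then have O0: "\<Omega> = {}" using finO cardn by simp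
    have "coherence \<Omega> N A \<le> 4 * ln (2 * real N ^ 2 / \<epsilon>) / sqrt n" for A
      using True by (intro coh_le) (simp_all add: O0)
    then show ?thesis using e by simp
  next
    case False
    then have n: "n > 0" by simp
    then obtain i0 where "i0 \<in> \<Omega>" using cardn by fastforce
    then have N1: "N \<ge> 1" using \<Omega> by auto
    have "real N ^ 2 \<ge> 1" using N1 by simp
    then have "1 \<le> 2 * real N ^ 2 / \<epsilon>" using e by (simp add: field_simps)
    then have L0: "L \<ge> 0" unfolding L_def by (rule ln_ge_zero)
    have Lpair: "L \<ge> 1" if "r \<in> {1..N}" "l \<in> {1..N}" "r \<noteq> l" for r l
    proof -
      have N2: "N \<ge> 2" using that by auto
      have "real N \<ge> 2" using N2 by simp
      then have "(2::real) ^ 2 \<le> real N ^ 2" by (intro power_mono) auto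
      then have "real N ^ 2 \<ge> 4" by simp
      then have "2 * real N ^ 2 / \<epsilon> \<ge> 8" using e by (simp add: field_simps)
      moreover have "exp 1 \<le> (8::real)" using exp_le by simp
      ultimately have "exp 1 \<le> 2 * real N ^ 2 / \<epsilon>" by linarith
      then have "ln (exp 1) \<le> ln (2 * real N ^ 2 / \<epsilon>)" by (intro ln_mono) auto
      then show ?thesis unfolding L_def by simp
    qed
    define Pairs where "Pairs = {(r,l). r \<in> {1..N} \<and> l \<in> {1..N} \<and> r \<noteq> l}"
    have Psub: "Pairs \<subseteq> {1..N} \<times> {1..N}" by (auto simp: Pairs_def)
    have finP: "finite Pairs" using Psub finite_subset by blast
    have cardP: "card Pairs \<le> N * N"
      using card_mono[OF _ Psub] by simp
    have arith: "real (card Pairs) * (4 * exp (- 2 * L)) \<le> \<epsilon>"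
    proof -
      have "real (card Pairs) * (4 * exp (- 2 * L)) \<le> real (N * N) * (4 * exp (- 2 * L))"
        using cardP by (intro mult_right_mono) (simp_all only: of_nat_le_iff, simp)
      also have "\<dots> \<le> \<epsilon>" unfolding L_def by (rule final_arith[OF N1 e])
      finally show ?thesis .
    qed
    have part1: "measure_pmf.prob (Pi_pmf {0..<N} 0 (\<lambda>_. rademacher_pmf))
           {b. coherence \<Omega> N (\<lambda>i j. circulant N b i j / sqrt n) \<le> 4 * L / sqrt n} \<ge> 1 - \<epsilon>"
    proof -
      have "measure_pmf.prob (Pi_pmf {0..<N} 0 (\<lambda>_. rademacher_pmf))
           {b. coherence \<Omega> N (\<lambda>i j. circulant N b i j / sqrt n) \<le> 4 * L / sqrt n}
           \<ge> 1 - card Pairs * (4 * exp (- 2 * L))"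
      proof (rule union_bound[OF finP, where Bad = "\<lambda>(r,l). {b. \<bar>\<Sum>i\<in>\<Omega>. b (nat ((int r - int i) mod int N)) * b (nat ((int l - int i) mod int N))\<bar> > 4 * L * sqrt n}"])
        fix b :: "nat \<Rightarrow> real"
        assume H: "\<forall>p\<in>Pairs. b \<notin> (case p of (r,l) \<Rightarrow> {b. \<bar>\<Sum>i\<in>\<Omega>. b (nat ((int r - int i) mod int N)) * b (nat ((int l - int i) mod int N))\<bar> > 4 * L * sqrt n})"
        have "coherence \<Omega> N (\<lambda>i j. circulant N b i j / sqrt n) \<le> 4 * L / sqrt n"
        proof (rule coh_le)
          show "0 \<le> 4 * L / sqrt n" using L0 by simp
        next
          fix r l assume rl: "r \<in> {1..N}" "l \<in> {1..N}" "r \<noteq> l"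
          then have "(r,l) \<in> Pairs" by (simp add: Pairs_def)
          then have "\<bar>\<Sum>i\<in>\<Omega>. b (nat ((int r - int i) mod int N)) * b (nat ((int l - int i) mod int N))\<bar> \<le> 4 * L * sqrt n"
            using H by fastforce
          then show "\<bar>\<Sum>i\<in>\<Omega>. circulant N b i r / sqrt n * (circulant N b i l / sqrt n)\<bar> \<le> 4 * L / sqrt n"
            unfolding circulant_def by (rule scale_bound[OF n])
        qed
        then show "b \<in> {b. coherence \<Omega> N (\<lambda>i j. circulant N b i j / sqrt n) \<le> 4 * L / sqrt n}" by simp
      next
        fix p assume "p \<in> Pairs"
        then obtain r l where p: "p = (r,l)" "r \<in> {1..N}" "l \<in> {1..N}" "r \<noteq> l" by (auto simp: Pairs_def)
        show "measure_pmf.prob (Pi_pmf {0..<N} 0 (\<lambda>_. rademacher_pmf)) (case p of (r,l) \<Rightarrow> {b. \<bar>\<Sum>i\<in>\<Omega>. b (nat ((int r - int i) mod int N)) * b (nat ((int l - int i) mod int N))\<bar> > 4 * L * sqrt n})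
              \<le> 4 * exp (- 2 * L)"
          unfolding p(1) using circ_pair[OF \<Omega> cardn n Lpair[OF p(2-4)] p(2-4)] by simp
      qed
      then show ?thesis using arith by linarith
    qed
    have part2: "measure_pmf.prob (Pi_pmf {-(int N - 1)..int N - 1} 0 (\<lambda>_. rademacher_pmf))
           {c. coherence \<Omega> N (\<lambda>i j. toeplitz c i j / sqrt n) \<le> 4 * L / sqrt n} \<ge> 1 - \<epsilon>"
    proof -
      have "measure_pmf.prob (Pi_pmf {-(int N - 1)..int N - 1} 0 (\<lambda>_. rademacher_pmf))
           {c. coherence \<Omega> N (\<lambda>i j. toeplitz c i j / sqrt n) \<le> 4 * L / sqrt n}
           \<ge> 1 - card Pairs * (4 * exp (- 2 * L))"
      proof (rule union_bound[OF finP, where Bad = "\<lambda>(r,l). {c. \<bar>\<Sum>i\<in>\<Omega>. c (int r - int i) * c (int l - int i)\<bar> > 4 * L * sqrt n}"])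
        fix c :: "int \<Rightarrow> real"
        assume H: "\<forall>p\<in>Pairs. c \<notin> (case p of (r,l) \<Rightarrow> {c. \<bar>\<Sum>i\<in>\<Omega>. c (int r - int i) * c (int l - int i)\<bar> > 4 * L * sqrt n})"
        have "coherence \<Omega> N (\<lambda>i j. toeplitz c i j / sqrt n) \<le> 4 * L / sqrt n"
        proof (rule coh_le)
          show "0 \<le> 4 * L / sqrt n" using L0 by simp
        next
          fix r l assume rl: "r \<in> {1..N}" "l \<in> {1..N}" "r \<noteq> l"
          then have "(r,l) \<in> Pairs" by (simp add: Pairs_def)
          then have "\<bar>\<Sum>i\<in>\<Omega>. c (int r - int i) * c (int l - int i)\<bar> \<le> 4 * L * sqrt n"
            using H by fastforce
          then show "\<bar>\<Sum>i\<in>\<Omega>. toeplitz c i r / sqrt n * (toeplitz c i l / sqrt n)\<bar> \<le> 4 * L / sqrt n"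
            unfolding toeplitz_def by (rule scale_bound[OF n])
        qed
        then show "c \<in> {c. coherence \<Omega> N (\<lambda>i j. toeplitz c i j / sqrt n) \<le> 4 * L / sqrt n}" by simp
      next
        fix p assume "p \<in> Pairs"
        then obtain r l where p: "p = (r,l)" "r \<in> {1..N}" "l \<in> {1..N}" "r \<noteq> l" by (auto simp: Pairs_def)
        show "measure_pmf.prob (Pi_pmf {-(int N - 1)..int N - 1} 0 (\<lambda>_. rademacher_pmf)) (case p of (r,l) \<Rightarrow> {c. \<bar>\<Sum>i\<in>\<Omega>. c (int r - int i) * c (int l - int i)\<bar> > 4 * L * sqrt n})
              \<le> 4 * exp (- 2 * L)"
          unfolding p(1) using toep_pair[OF \<Omega> cardn n Lpair[OF p(2-4)] p(2-4)] by simp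
      qed
      then show ?thesis using arith by linarith
    qed
    show ?thesis using part1 part2 by (simp add: L_def)
  qed
qed
end
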